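(* Given an instance of the Squared Metric Facility Location Problem, let $\alpha$ be the vector of final budgets produced by Algorithm $A1$. Then for every facility $i$ and cities $j$ and $j'$, $\sqrt{\alpha_j} \le \sqrt{\alpha_{j'}} +\sqrt{c_{ij'}} + \sqrt{c_{ij}}$.
   Context: Facility Location instance: finite disjoint sets $C$ (cities), $F$ (facilities), non-negative $c_{ij}$, $f_i$. Squared metric: $\sqrt{c_{ij}}\le \sqrt{c_{ij'}}+\sqrt{c_{i'j'}}+\sqrt{c_{i'j}}$ for all $i,i'\in F$, $j,j'\in C$. Algorithm $A1$: initially all facilities are unopened and all cities unconnected ($U:=C$); each city $j$ has a budget $\alpha_j=0$; an unconnected city $j$ offers $\max(\alpha_j-c_{ij},0)$ to each unopened facility $i$. While $U\ne\emptyset$, the budgets of all unconnected cities increase continuously at the same rate (connected cities' budgets stay fixed) until: (a) for some unconnected $j$ and open $i$, $\alpha_j=c_{ij}$: connect $j$ to $i$ and remove $j$ from $U$; or (b) for some unopened $i$, $\sum_{j\in U}\max(\alpha_j-c_{ij},0)=f_i$: open $i$ and connect to $i$ every unconnected $j$ with $\alpha_j\ge c_{ij}$, removing them from $U$. *)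

theory Defs
  imports Main Complex_Main
begin

text \<open>Model of Algorithm A1 as a discrete-event process.
  A state is (t, U, Op, alpha): current time t (= the common budget of all
  unconnected cities), the set U of unconnected cities, the set Op of opened
  facilities, and the budgets alpha of the already connected cities
  (frozen at the moment of connection).  Each step advances time to the
  earliest moment t' >= t at which an event of type (a) or (b) occurs and
  processes one such event (simultaneous events are processed one after the
  other, in any order).\<close>

type_synonym ('c, 'f) a1_state = "real \<times> 'c set \<times> 'f set \<times> ('c \<Rightarrow> real)"

definition offer :: "('f \<Rightarrow> 'c \<Rightarrow> real) \<Rightarrow> 'c set \<Rightarrow> 'f \<Rightarrow> real \<Rightarrow> real" where
  "offer c U i s = (\<Sum>j\<in>U. max (s - c i j) 0)"

definition a1_event :: "'f set \<Rightarrow> ('f \<Rightarrow> 'c \<Rightarrow> real) \<Rightarrow> ('f \<Rightarrow> real)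
    \<Rightarrow> 'c set \<Rightarrow> 'f set \<Rightarrow> real \<Rightarrow> bool" where
  "a1_event F c f U Op s \<longleftrightarrow>
     (\<exists>j\<in>U. \<exists>i\<in>Op. s = c i j) \<or> (\<exists>i\<in>F - Op. offer c U i s = f i)"

inductive a1_step :: "'f set \<Rightarrow> ('f \<Rightarrow> 'c \<Rightarrow> real) \<Rightarrow> ('f \<Rightarrow> real)
    \<Rightarrow> ('c, 'f) a1_state \<Rightarrow> ('c, 'f) a1_state \<Rightarrow> bool"
  for F c f where
  connect: "\<lbrakk> U \<noteq> {}; t \<le> t'; \<forall>s. t \<le> s \<and> s < t' \<longrightarrow> \<not> a1_event F c f U Op s;
             j \<in> U; i \<in> Op; t' = c i j \<rbrakk>
            \<Longrightarrow> a1_step F c f (t, U, Op, \<alpha>) (t', U - {j}, Op, \<alpha>(j := t'))"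
| open_fac: "\<lbrakk> U \<noteq> {}; t \<le> t'; \<forall>s. t \<le> s \<and> s < t' \<longrightarrow> \<not> a1_event F c f U Op s;
             i \<in> F; i \<notin> Op; offer c U i t' = f i \<rbrakk>
            \<Longrightarrow> a1_step F c f (t, U, Op, \<alpha>)
                 (t', U - {j\<in>U. c i j \<le> t'}, insert i Op,
                  (\<lambda>j. if j \<in> U \<and> c i j \<le> t' then t' else \<alpha> j))"

definition a1_output :: "'c set \<Rightarrow> 'f set \<Rightarrow> ('f \<Rightarrow> 'c \<Rightarrow> real) \<Rightarrow> ('f \<Rightarrow> real)
    \<Rightarrow> ('c \<Rightarrow> real) \<Rightarrow> bool" where
  "a1_output C F c f \<alpha> \<longleftrightarrow>
     (\<exists>t Op. (a1_step F c f)\<^sup>*\<^sup>* (0, C, {}, (\<lambda>_. 0)) (t, {}, Op, \<alpha>))"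

definition squared_metric :: "'c set \<Rightarrow> 'f set \<Rightarrow> ('f \<Rightarrow> 'c \<Rightarrow> real) \<Rightarrow> bool" where
  "squared_metric C F c \<longleftrightarrow>
     (\<forall>i\<in>F. \<forall>i'\<in>F. \<forall>j\<in>C. \<forall>j'\<in>C.
        sqrt (c i j) \<le> sqrt (c i j') + sqrt (c i' j') + sqrt (c i' j))"

end

theory Submission
  imports Defs
begin

definition inv :: "'c set \<Rightarrow> 'f set \<Rightarrow> ('f \<Rightarrow> 'c \<Rightarrow> real) \<Rightarrow> ('c, 'f) a1_state \<Rightarrow> bool" where
  "inv C F c st = (case st of (t, U, Op, \<alpha>) \<Rightarrow>
     U \<subseteq> C \<and> Op \<subseteq> F \<and> (\<forall>j\<in>U. \<forall>i\<in>Op. t \<le> c i j) \<and> (\<forall>j\<in>C-U. \<alpha> j \<le> t) \<and>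
     (\<forall>j'\<in>C-U. \<exists>i'\<in>Op. c i' j' \<le> \<alpha> j' \<and> (\<forall>j\<in>C-U. \<alpha> j \<le> max (\<alpha> j') (c i' j))))"

lemma no_skip:
  assumes "\<forall>s. t \<le> s \<and> s < t' \<longrightarrow> \<not> a1_event F c f U Op s"
    and "j \<in> U" and "i \<in> Op" and "t \<le> c i j"
  shows "t' \<le> c i j"
proof (rule ccontr)
  assume "\<not> t' \<le> c i j"
  hence "a1_event F c f U Op (c i j)" using assms(2,3) unfolding a1_event_def by blast
  thus False using assms `\<not> t' \<le> c i j` by force
qed

lemma step_inv:
  assumes "a1_step F c f st st'" and "inv C F c st"
  shows "inv C F c st'"
  using assms
proof (induction rule: a1_step.induct)
  case (connect U t t' Op j0 i0 \<alpha>)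
  have I: "U \<subseteq> C" "Op \<subseteq> F" "\<forall>j\<in>U. \<forall>i\<in>Op. t \<le> c i j" "\<forall>j\<in>C-U. \<alpha> j \<le> t"
    "\<forall>j'\<in>C-U. \<exists>i'\<in>Op. c i' j' \<le> \<alpha> j' \<and> (\<forall>j\<in>C-U. \<alpha> j \<le> max (\<alpha> j') (c i' j))"
    using connect.prems unfolding inv_def by auto
  have NS: "\<And>j i. j \<in> U \<Longrightarrow> i \<in> Op \<Longrightarrow> t' \<le> c i j"
    using no_skip[OF connect.hyps(3)] I(3) by blast
  show ?case unfolding inv_def
  proof (simp only: prod.case, intro conjI ballI)
    show "U - {j0} \<subseteq> C" using I by auto
    show "Op \<subseteq> F" using I by auto
    show "\<And>j i. j \<in> U - {j0} \<Longrightarrow> i \<in> Op \<Longrightarrow> t' \<le> c i j" using NS by auto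
    show "\<And>j. j \<in> C - (U - {j0}) \<Longrightarrow> (\<alpha>(j0 := t')) j \<le> t'"
    proof -
      fix j assume "j \<in> C - (U - {j0})"
      thus "(\<alpha>(j0 := t')) j \<le> t'"
      proof (cases "j = j0")
        case False
        hence "j \<in> C - U" using `j \<in> C - (U - {j0})` by auto
        hence "\<alpha> j \<le> t" using I(4) by blast
        thus ?thesis using connect.hyps(2) False by simp
      qed simp
    qed
    fix j' assume j': "j' \<in> C - (U - {j0})"
    show "\<exists>i'\<in>Op. c i' j' \<le> (\<alpha>(j0 := t')) j' \<and>
          (\<forall>j\<in>C - (U - {j0}). (\<alpha>(j0 := t')) j \<le> max ((\<alpha>(j0 := t')) j') (c i' j))"
    proof (cases "j' = j0")
      case True
      have "\<forall>j\<in>C - (U - {j0}). (\<alpha>(j0 := t')) j \<le> t'"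
      proof
        fix j assume "j \<in> C - (U - {j0})"
        thus "(\<alpha>(j0 := t')) j \<le> t'"
        proof (cases "j = j0")
          case False
          hence "j \<in> C - U" using `j \<in> C - (U - {j0})` by auto
          hence "\<alpha> j \<le> t" using I(4) by blast
          thus ?thesis using connect.hyps(2) False by simp
        qed simp
      qed
      hence "\<forall>j\<in>C - (U - {j0}). (\<alpha>(j0 := t')) j \<le> max ((\<alpha>(j0 := t')) j0) (c i0 j)"
        by (metis (no_types, lifting) fun_upd_same max.coboundedI1)
      moreover have "c i0 j0 \<le> (\<alpha>(j0 := t')) j0" using connect.hyps(6) by simp
      ultimately show ?thesis using True connect.hyps(5) by blast
    next
      case False
      hence j'C: "j' \<in> C - U" using j' by auto
      then obtain i' where i': "i' \<in> Op" "c i' j' \<le> \<alpha> j'"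
        "\<forall>j\<in>C-U. \<alpha> j \<le> max (\<alpha> j') (c i' j)" using I(5) by blast
      have "\<forall>j\<in>C - (U - {j0}). (\<alpha>(j0 := t')) j \<le> max ((\<alpha>(j0 := t')) j') (c i' j)"
      proof
        fix j assume j: "j \<in> C - (U - {j0})"
        show "(\<alpha>(j0 := t')) j \<le> max ((\<alpha>(j0 := t')) j') (c i' j)"
        proof (cases "j = j0")
          case True
          thus ?thesis using NS[OF connect.hyps(4) i'(1)] by simp
        next
          case F2: False
          hence "j \<in> C - U" using j by auto
          thus ?thesis using i'(3) F2 False by simp
        qed
      qed
      moreover have "c i' j' \<le> (\<alpha>(j0 := t')) j'" using i'(2) False by simp
      ultimately show ?thesis using i'(1) by blast
    qed
  qed
next
  case (open_fac U t t' Op i0 \<alpha>)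
  have I: "U \<subseteq> C" "Op \<subseteq> F" "\<forall>j\<in>U. \<forall>i\<in>Op. t \<le> c i j" "\<forall>j\<in>C-U. \<alpha> j \<le> t"
    "\<forall>j'\<in>C-U. \<exists>i'\<in>Op. c i' j' \<le> \<alpha> j' \<and> (\<forall>j\<in>C-U. \<alpha> j \<le> max (\<alpha> j') (c i' j))"
    using open_fac.prems unfolding inv_def by auto
  have NS: "\<And>j i. j \<in> U \<Longrightarrow> i \<in> Op \<Longrightarrow> t' \<le> c i j"
    using no_skip[OF open_fac.hyps(3)] I(3) by blast
  define U' where "U' = U - {j\<in>U. c i0 j \<le> t'}"
  define \<alpha>' where "\<alpha>' = (\<lambda>j. if j \<in> U \<and> c i0 j \<le> t' then t' else \<alpha> j)"
  have "inv C F c (t', U', insert i0 Op, \<alpha>')" unfolding inv_def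
  proof (simp only: prod.case, intro conjI ballI)
    show "U' \<subseteq> C" using I unfolding U'_def by auto
    show "insert i0 Op \<subseteq> F" using I open_fac.hyps by auto
    show "\<And>j i. j \<in> U' \<Longrightarrow> i \<in> insert i0 Op \<Longrightarrow> t' \<le> c i j" using NS unfolding U'_def by force
    show A: "\<And>j. j \<in> C - U' \<Longrightarrow> \<alpha>' j \<le> t'"
    proof -
      fix j assume j: "j \<in> C - U'"
      show "\<alpha>' j \<le> t'"
      proof (cases "j \<in> U \<and> c i0 j \<le> t'")
        case True thus ?thesis unfolding \<alpha>'_def by simp
      next
        case False
        hence "j \<in> C - U" using j unfolding U'_def by auto
        hence "\<alpha> j \<le> t" using I(4) by blast
        thus ?thesis using False open_fac.hyps(2) unfolding \<alpha>'_def by simp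
      qed
    qed
    fix j' assume j': "j' \<in> C - U'"
    show "\<exists>i'\<in>insert i0 Op. c i' j' \<le> \<alpha>' j' \<and> (\<forall>j\<in>C - U'. \<alpha>' j \<le> max (\<alpha>' j') (c i' j))"
    proof (cases "j' \<in> U")
      case True
      hence "c i0 j' \<le> t'" using j' unfolding U'_def by auto
      have e: "\<alpha>' j' = t'" using True `c i0 j' \<le> t'` unfolding \<alpha>'_def by simp
      have "\<forall>j\<in>C - U'. \<alpha>' j \<le> max (\<alpha>' j') (c i0 j)"
      proof
        fix j assume "j \<in> C - U'"
        hence "\<alpha>' j \<le> t'" by (rule A)
        thus "\<alpha>' j \<le> max (\<alpha>' j') (c i0 j)" using e by simp
      qed
      thus ?thesis using e `c i0 j' \<le> t'` by blast
    next
      case False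
      hence j'C: "j' \<in> C - U" using j' by auto
      then obtain i' where i': "i' \<in> Op" "c i' j' \<le> \<alpha> j'"
        "\<forall>j\<in>C-U. \<alpha> j \<le> max (\<alpha> j') (c i' j)" using I(5) by blast
      have "\<forall>j\<in>C - U'. \<alpha>' j \<le> max (\<alpha>' j') (c i' j)"
      proof
        fix j assume j: "j \<in> C - U'"
        show "\<alpha>' j \<le> max (\<alpha>' j') (c i' j)"
        proof (cases "j \<in> U")
          case True
          hence "\<alpha>' j = t'" using j unfolding U'_def \<alpha>'_def by auto
          thus ?thesis using NS[OF True i'(1)] by auto
        next
          case False
          thus ?thesis using j i'(3) j'C unfolding \<alpha>'_def by auto
        qed
      qed
      moreover have "\<alpha>' j' = \<alpha> j'" using False unfolding \<alpha>'_def by simp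
      ultimately have "c i' j' \<le> \<alpha>' j' \<and> (\<forall>j\<in>C - U'. \<alpha>' j \<le> max (\<alpha>' j') (c i' j))"
        using i'(2) by simp
      thus ?thesis using i'(1) by blast
    qed
  qed
  thus ?case unfolding U'_def \<alpha>'_def .
qed

lemma star_inv:
  assumes "(a1_step F c f)\<^sup>*\<^sup>* st st'" and "inv C F c st"
  shows "inv C F c st'"
  using assms by (induction rule: rtranclp_induct) (auto intro: step_inv)

theorem lemma1:
  fixes C :: "'c set" and F :: "'f set"
    and c :: "'f \<Rightarrow> 'c \<Rightarrow> real" and f :: "'f \<Rightarrow> real" and \<alpha> :: "'c \<Rightarrow> real"
  assumes "finite C" and "finite F"
    and "\<forall>i\<in>F. \<forall>j\<in>C. c i j \<ge> 0"
    and "\<forall>i\<in>F. f i \<ge> 0"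
    and "squared_metric C F c"
    and "a1_output C F c f \<alpha>"
    and "i \<in> F" and "j \<in> C" and "j' \<in> C"
  shows "sqrt (\<alpha> j) \<le> sqrt (\<alpha> j') + sqrt (c i j') + sqrt (c i j)"
proof -
  obtain t Op where r: "(a1_step F c f)\<^sup>*\<^sup>* (0, C, {}, (\<lambda>_. 0)) (t, {}, Op, \<alpha>)"
    using assms(6) unfolding a1_output_def by blast
  have "inv C F c (0, C, {}, (\<lambda>_. 0))" unfolding inv_def by auto
  hence I: "inv C F c (t, {}, Op, \<alpha>)" using star_inv[OF r] by blast
  hence OF: "Op \<subseteq> F" and W: "\<forall>j'\<in>C. \<exists>i'\<in>Op. c i' j' \<le> \<alpha> j' \<and> (\<forall>j\<in>C. \<alpha> j \<le> max (\<alpha> j') (c i' j))"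
    unfolding inv_def by auto
  then obtain i' where i'0: "i' \<in> Op" "c i' j' \<le> \<alpha> j'" "\<alpha> j \<le> max (\<alpha> j') (c i' j)"
    using assms(8,9) by blast
  hence i': "i' \<in> F" "c i' j' \<le> \<alpha> j'" "\<alpha> j \<le> max (\<alpha> j') (c i' j)" using OF by auto
  have m: "sqrt (c i' j) \<le> sqrt (c i' j') + sqrt (c i j') + sqrt (c i j)"
    using assms(5) i'(1) assms(7-9) unfolding squared_metric_def by blast
  have a: "sqrt (c i' j') \<le> sqrt (\<alpha> j')" using i'(2) by simp
  have p: "sqrt (c i j') \<ge> 0" "sqrt (c i j) \<ge> 0" using assms(3,7-9) by auto
  have "sqrt (\<alpha> j) \<le> max (sqrt (\<alpha> j')) (sqrt (c i' j))"
    using i'(3) by (auto simp: max_def split: if_splits)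
  thus ?thesis using m a p by linarith
qed

end
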